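(* If $G$ is a finite simple unmixed graph without induced $4$-cycles, then $I_c(G)$ is linearly presented.
   Context: $G$ has vertices $t_1,\dots,t_s$, $S=K[t_1,\dots,t_s]$, $K$ a field. $G$ is unmixed if all minimal vertex covers (inclusion-minimal vertex sets meeting every edge) have equal size. $I_c(G)$ is the ideal generated by $\prod_{t_i\in C}t_i$ over the minimal vertex covers $C$ of $G$. A monomial ideal minimally generated by $u_1,\dots,u_r$ is linearly presented if all $u_i$ have the same degree and the kernel of $S^r\to S$, $e_i\mapsto u_i$, is generated by vectors whose entries are linear forms. *)

theory Defs
  imports Main "HOL-Library.Poly_Mapping"
begin

definition simple_graph :: "'v set \<Rightarrow> 'v set set \<Rightarrow> bool" where
  "simple_graph V E \<longleftrightarrow> finite V \<and> (\<forall>e\<in>E. e \<subseteq> V \<and> card e = 2)"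

definition vertex_cover :: "'v set \<Rightarrow> 'v set set \<Rightarrow> 'v set \<Rightarrow> bool" where
  "vertex_cover V E C \<longleftrightarrow> C \<subseteq> V \<and> (\<forall>e\<in>E. e \<inter> C \<noteq> {})"

definition minimal_vertex_cover :: "'v set \<Rightarrow> 'v set set \<Rightarrow> 'v set \<Rightarrow> bool" where
  "minimal_vertex_cover V E C \<longleftrightarrow> vertex_cover V E C \<and>
     (\<forall>D. D \<subset> C \<longrightarrow> \<not> vertex_cover V E D)"

definition unmixed :: "'v set \<Rightarrow> 'v set set \<Rightarrow> bool" where
  "unmixed V E \<longleftrightarrow> (\<forall>C D. minimal_vertex_cover V E C \<longrightarrow> minimal_vertex_cover V E D
      \<longrightarrow> card C = card D)"

definition has_induced_C4 :: "'v set \<Rightarrow> 'v set set \<Rightarrow> bool" where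
  "has_induced_C4 V E \<longleftrightarrow> (\<exists>a b c d. a \<in> V \<and> b \<in> V \<and> c \<in> V \<and> d \<in> V \<and>
     distinct [a, b, c, d] \<and>
     {a, b} \<in> E \<and> {b, c} \<in> E \<and> {c, d} \<in> E \<and> {d, a} \<in> E \<and>
     {a, c} \<notin> E \<and> {b, d} \<notin> E)"

type_synonym ('v, 'k) mpoly = "('v \<Rightarrow>\<^sub>0 nat) \<Rightarrow>\<^sub>0 'k"

definition monom :: "('v \<Rightarrow>\<^sub>0 nat) \<Rightarrow> ('v, 'k::field) mpoly" where
  "monom a = Poly_Mapping.single a 1"

definition tdeg :: "('v \<Rightarrow>\<^sub>0 nat) \<Rightarrow> nat" where
  "tdeg a = (\<Sum>v\<in>Poly_Mapping.keys a. Poly_Mapping.lookup a v)"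

definition sqfree_exp :: "'v set \<Rightarrow> ('v \<Rightarrow>\<^sub>0 nat)" where
  "sqfree_exp C = (\<Sum>v\<in>C. Poly_Mapping.single v 1)"

definition ideal_gen :: "('v, 'k::field) mpoly set \<Rightarrow> ('v, 'k) mpoly set" where
  "ideal_gen U = {p. \<exists>F c. finite F \<and> F \<subseteq> U \<and> p = (\<Sum>u\<in>F. c u * u)}"

definition cover_ideal :: "'v set \<Rightarrow> 'v set set \<Rightarrow> ('v, 'k::field) mpoly set" where
  "cover_ideal V E = ideal_gen {monom (sqfree_exp C) | C. minimal_vertex_cover V E C}"

definition min_monomial_gens :: "('v, 'k::field) mpoly set \<Rightarrow> ('v \<Rightarrow>\<^sub>0 nat) set" where
  "min_monomial_gens I = {a. monom a \<in> I \<and>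
      (\<forall>b. (\<forall>v. Poly_Mapping.lookup b v \<le> Poly_Mapping.lookup a v) \<and> b \<noteq> a \<longrightarrow> monom b \<notin> I)}"

definition linear_form :: "('v, 'k::field) mpoly \<Rightarrow> bool" where
  "linear_form p \<longleftrightarrow> (\<forall>m\<in>Poly_Mapping.keys p. tdeg m = 1)"

text \<open>Kernel of S^M \<rightarrow> S, e_a \<mapsto> t^a, for a finite index set M of exponent vectors.
  Vectors are functions M \<rightarrow> S (zero outside M).\<close>
definition syz :: "('v \<Rightarrow>\<^sub>0 nat) set \<Rightarrow> (('v \<Rightarrow>\<^sub>0 nat) \<Rightarrow> ('v, 'k::field) mpoly) set" where
  "syz M = {f. (\<forall>a. a \<notin> M \<longrightarrow> f a = 0) \<and> (\<Sum>a\<in>M. f a * monom a) = 0}"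

definition module_span ::
  "(('v \<Rightarrow>\<^sub>0 nat) \<Rightarrow> ('v, 'k::field) mpoly) set \<Rightarrow> (('v \<Rightarrow>\<^sub>0 nat) \<Rightarrow> ('v, 'k) mpoly) set" where
  "module_span L = {f. \<exists>F c. finite F \<and> F \<subseteq> L \<and> f = (\<lambda>a. \<Sum>g\<in>F. c g * g a)}"

definition linearly_presented :: "('v, 'k::field) mpoly set \<Rightarrow> bool" where
  "linearly_presented I \<longleftrightarrow>
     (let M = min_monomial_gens I in
       finite M \<and>
       (\<forall>a\<in>M. \<forall>b\<in>M. tdeg a = tdeg b) \<and>
       (\<exists>L :: (('v \<Rightarrow>\<^sub>0 nat) \<Rightarrow> ('v, 'k) mpoly) set. L \<subseteq> syz M \<and> (\<forall>g\<in>L. \<forall>a\<in>M. linear_form (g a)) \<and>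
            syz M \<subseteq> module_span L))"

end

theory Submission
  imports Defs
begin


definition indep :: "'v set \<Rightarrow> 'v set set \<Rightarrow> 'v set \<Rightarrow> bool" where
  "indep V E A \<longleftrightarrow> A \<subseteq> V \<and> (\<forall>e\<in>E. \<not> e \<subseteq> A)"

definition maxind :: "'v set \<Rightarrow> 'v set set \<Rightarrow> 'v set \<Rightarrow> bool" where
  "maxind V E A \<longleftrightarrow> indep V E A \<and> (\<forall>v\<in>V - A. \<not> indep V E (insert v A))"

definition NS :: "'v set set \<Rightarrow> 'v set \<Rightarrow> 'v set" where
  "NS E S = S \<union> {v. \<exists>s\<in>S. {s, v} \<in> E}"

definition Rel :: "'v set \<Rightarrow> 'v set set \<Rightarrow> 'v set \<Rightarrow> 'v set \<Rightarrow> 'v set \<Rightarrow> bool" where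
  "Rel V E S X Y \<longleftrightarrow> maxind V E X \<and> maxind V E Y \<and> card (X - Y) = 1 \<and> S \<subseteq> X \<and> S \<subseteq> Y"

lemma Rel_mono: assumes "S \<subseteq> S'" "(Rel V E S')\<^sup>*\<^sup>* X Y" shows "(Rel V E S)\<^sup>*\<^sup>* X Y"
  using assms(2)
proof (induction rule: rtranclp_induct)
  case (step y z)
  then have "Rel V E S y z" using assms(1) by (auto simp: Rel_def)
  then show ?case using step by (meson rtranclp.rtrancl_into_rtrancl)
qed simp

locale sgr =
  fixes V :: "'v set" and E :: "'v set set"
  assumes sg: "simple_graph V E"
begin

lemma finV: "finite V" using sg by (simp add: simple_graph_def)

lemma edge: "e \<in> E \<Longrightarrow> e \<subseteq> V \<and> card e = 2" using sg by (simp add: simple_graph_def)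

lemma edge_in: "{x, y} \<in> E \<Longrightarrow> x \<in> V \<and> y \<in> V \<and> x \<noteq> y"
  using edge[of "{x,y}"] by (auto simp: card_insert_if split: if_splits)

lemma edge_mem: "e \<in> E \<Longrightarrow> y \<in> e \<Longrightarrow> \<exists>z. z \<noteq> y \<and> e = {y, z}"
proof -
  assume "e \<in> E" "y \<in> e"
  then have "card e = 2" using edge by blast
  then obtain a b where "a \<noteq> b" "e = {a, b}" by (meson card_2_iff)
  then show ?thesis using \<open>y \<in> e\<close> by auto
qed

lemma indep_edge: "indep V E A \<Longrightarrow> x \<in> A \<Longrightarrow> z \<in> A \<Longrightarrow> {x, z} \<notin> E"
  by (auto simp: indep_def)

lemma indep_subset: "indep V E A \<Longrightarrow> B \<subseteq> A \<Longrightarrow> indep V E B"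
  unfolding indep_def by blast

lemma indep_insert:
  assumes A: "indep V E A" and y: "y \<in> V" "\<forall>a\<in>A. {y, a} \<notin> E"
  shows "indep V E (insert y A)"
  unfolding indep_def
proof (intro conjI ballI)
  show "insert y A \<subseteq> V" using A y by (auto simp: indep_def)
next
  fix e assume e: "e \<in> E"
  show "\<not> e \<subseteq> insert y A"
  proof
    assume s: "e \<subseteq> insert y A"
    show False
    proof (cases "y \<in> e")
      case True
      then obtain z where "z \<noteq> y" "e = {y, z}" using edge_mem e by blast
      then show False using s y e by auto
    next
      case False
      then show False using s A e by (auto simp: indep_def)
    qed
  qed
qed

lemma not_indep_insert:
  assumes "indep V E A" "\<not> indep V E (insert y A)" "y \<in> V" "y \<notin> A"
  shows "\<exists>x\<in>A. {y, x} \<in> E"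
  using indep_insert assms by blast

lemma maxind_nbr:
  assumes "maxind V E A" "y \<in> V" "y \<notin> A"
  shows "\<exists>x\<in>A. {y, x} \<in> E"
  using assms not_indep_insert by (auto simp: maxind_def)

lemma extend_maxind: "indep V E X \<Longrightarrow> \<exists>Z. maxind V E Z \<and> X \<subseteq> Z"
proof (induction "card (V - X)" arbitrary: X rule: less_induct)
  case less
  show ?case
  proof (cases "maxind V E X")
    case True then show ?thesis by blast
  next
    case False
    then obtain v where v: "v \<in> V - X" "indep V E (insert v X)" using less.prems by (auto simp: maxind_def)
    have "card (V - insert v X) < card (V - X)"
      using v finV by (intro psubset_card_mono) auto
    from less.hyps[OF this v(2)] show ?thesis by blast
  qed
qed

end

locale wc = sgr V E for V :: "'v set" and E :: "'v set set" +
  fixes \<alpha> :: nat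
  assumes wc: "\<And>A. maxind V E A \<Longrightarrow> card A = \<alpha>"
    and noC4: "\<not> has_induced_C4 V E"
begin

lemma card_maxind: "indep V E X \<Longrightarrow> card X = \<alpha> \<Longrightarrow> maxind V E X"
proof (rule ccontr)
  assume X: "indep V E X" "card X = \<alpha>" "\<not> maxind V E X"
  then obtain v where v: "v \<in> V - X" "indep V E (insert v X)" by (auto simp: maxind_def)
  then obtain Z where Z: "maxind V E Z" "insert v X \<subseteq> Z" using extend_maxind by blast
  have "finite Z" using Z finV by (meson indep_def maxind_def finite_subset)
  then have "card (insert v X) \<le> card Z" using Z card_mono by blast
  moreover have "finite X" using X finV by (meson indep_def finite_subset)
  ultimately show False using v X wc[OF Z(1)] by simp
qed

lemma maxind_sub_eq: "maxind V E B \<Longrightarrow> indep V E A \<Longrightarrow> B \<subseteq> A \<Longrightarrow> A = B"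
proof (rule ccontr)
  assume B: "maxind V E B" and A: "indep V E A" and BA: "B \<subseteq> A" and ne: "A \<noteq> B"
  then obtain v where v: "v \<in> A" "v \<notin> B" by blast
  then have "v \<in> V" using A by (auto simp: indep_def)
  moreover have "indep V E (insert v B)" using indep_subset[OF A] v BA by blast
  ultimately show False using B v by (auto simp: maxind_def)
qed

lemma NS_mono: "S \<subseteq> T \<Longrightarrow> NS E S \<subseteq> NS E T"
  by (auto simp: NS_def)

lemma card_less_NS:
  assumes "S \<subseteq> T" "t \<in> V" "t \<notin> NS E S" "t \<in> NS E T"
  shows "card (V - NS E T) < card (V - NS E S)"
  using assms finV NS_mono[OF assms(1)] by (intro psubset_card_mono) auto

lemma reach:
  assumes "indep V E S" "maxind V E A" "S \<subseteq> A" "y \<in> V" "y \<notin> NS E S" "y \<notin> A"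
  shows "\<exists>A1. (Rel V E S)\<^sup>*\<^sup>* A A1 \<and> y \<in> A1"
  using assms
proof (induction "card (V - NS E S)" arbitrary: S A rule: less_induct)
  case less
  note S = less.prems(1) and A = less.prems(2) and SA = less.prems(3) and y = less.prems(4-6)
  have Aind: "indep V E A" using A by (simp add: maxind_def)
  have ySadj: "\<forall>s\<in>S. {s, y} \<notin> E" using y by (auto simp: NS_def)
  have yS: "y \<notin> S" using y by (auto simp: NS_def)
  show ?case
  proof (cases "\<exists>t\<in>A - S. {t, y} \<notin> E")
    case True
    then obtain t where t: "t \<in> A - S" "{t, y} \<notin> E" by blast
    define T where "T = {a\<in>A. {a, y} \<notin> E}"
    have T: "indep V E T" using Aind by (rule indep_subset) (auto simp: T_def)
    have ST: "S \<subseteq> T" using SA ySadj by (auto simp: T_def)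
    have yT: "y \<notin> NS E T" using y by (auto simp: NS_def T_def insert_commute)
    have tV: "t \<in> V" using t Aind by (auto simp: indep_def)
    have tNS: "t \<notin> NS E S" using t SA indep_edge[OF Aind] by (auto simp: NS_def)
    have "t \<in> NS E T" using t by (auto simp: NS_def T_def)
    then have "card (V - NS E T) < card (V - NS E S)" using card_less_NS[OF ST tV tNS] by blast
    from less.hyps[OF this T A _ y(1) yT y(3)] obtain A1 where "(Rel V E T)\<^sup>*\<^sup>* A A1" "y \<in> A1"
      by (auto simp: T_def)
    then show ?thesis using Rel_mono[OF ST] by blast
  next
    case False
    then have alladj: "\<forall>a\<in>A - S. {a, y} \<in> E" by blast
    obtain x where x: "x \<in> A" "{y, x} \<in> E" using maxind_nbr[OF A y(1) y(3)] by blast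
    have xS: "x \<notin> S" using x ySadj by (auto simp: insert_commute)
    show ?thesis
    proof (cases "\<forall>x'\<in>A. {y, x'} \<in> E \<longrightarrow> x' = x")
      case True
      define A1 where "A1 = insert y (A - {x})"
      have "indep V E A1" unfolding A1_def
        using True y(1) by (intro indep_insert indep_subset[OF Aind]) auto
      moreover have "card A1 = \<alpha>"
      proof -
        have finA: "finite A" using Aind finV by (meson indep_def finite_subset)
        have "card (A - {x}) = card A - 1" using x finA by (simp add: card_Diff_singleton)
        moreover have "card A > 0" using finA x card_gt_0_iff by blast
        ultimately show ?thesis using wc[OF A] finA y(3) by (simp add: A1_def)
      qed
      ultimately have A1: "maxind V E A1" by (rule card_maxind)
      have "A - A1 = {x}" using x y(3) by (auto simp: A1_def)
      then have "Rel V E S A A1" using A A1 SA xS by (auto simp: Rel_def A1_def)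
      then show ?thesis by (auto simp: A1_def)
    next
      case False
      then obtain x2 where x2: "x2 \<in> A" "{y, x2} \<in> E" "x2 \<noteq> x" by blast
      have x2S: "x2 \<notin> S" using x2 ySadj by (auto simp: insert_commute)
      define U where "U = insert y S"
      have U: "indep V E U" unfolding U_def using S y(1) ySadj
        by (intro indep_insert) (auto simp: insert_commute)
      have finA: "finite A" using Aind finV by (meson indep_def finite_subset)
      have "card (insert x (insert x2 S)) \<le> card A"
        using finA SA x x2 by (intro card_mono) auto
      then have "card S + 2 \<le> \<alpha>" using wc[OF A] x2 xS x2S finite_subset[OF SA finA] by simp
      moreover have "card U = card S + 1" using yS finite_subset[OF SA finA] by (simp add: U_def)
      ultimately have "\<not> maxind V E U" using wc by fastforce
      then obtain z where z: "z \<in> V - U" "indep V E (insert z U)" using U by (auto simp: maxind_def)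
      have zy: "z \<noteq> y" "{y, z} \<notin> E" using z by (auto simp: U_def indep_def)
      have zSadj: "\<forall>s\<in>S. {s, z} \<notin> E" using z by (auto simp: U_def indep_def)
      have zS: "z \<notin> S" using z by (auto simp: U_def)
      have zA: "z \<notin> A"
      proof
        assume "z \<in> A"
        then have "{z, y} \<in> E" using alladj zS by blast
        then show False using zy by (simp add: insert_commute)
      qed
      obtain x' where x': "x' \<in> A" "{z, x'} \<in> E" using maxind_nbr[OF A _ zA] z by blast
      have uniq: "\<forall>w\<in>A. {z, w} \<in> E \<longrightarrow> w = x'"
      proof (intro ballI impI, rule ccontr)
        fix w assume w: "w \<in> A" "{z, w} \<in> E" "w \<noteq> x'"
        have wS: "w \<notin> S" "x' \<notin> S" using w x' zSadj by (auto simp: insert_commute)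
        have e1: "{y, x'} \<in> E" "{y, w} \<in> E" using alladj wS w x' by (auto simp: insert_commute)
        have s1: "{x', z} \<in> E" using x'(2) by (simp add: insert_commute)
        have s2: "{w, y} \<in> E" using e1(2) by (simp add: insert_commute)
        have d: "distinct [y, x', z, w]"
          using w x' zy zA y(3) by auto
        have V4: "y \<in> V" "x' \<in> V" "z \<in> V" "w \<in> V"
          using edge_in[OF e1(1)] edge_in[OF w(2)] by auto
        have n2: "{x', w} \<notin> E" using indep_edge[OF Aind x'(1) w(1)] .
        have "has_induced_C4 V E"
          unfolding has_induced_C4_def
          using V4 d e1(1) s1 w(2) s2 zy(2) n2 by blast
        then show False using noC4 by blast
      qed
      define A1 where "A1 = insert z (A - {x'})"
      have "indep V E A1" unfolding A1_def
        using uniq z by (intro indep_insert indep_subset[OF Aind]) (auto simp: insert_commute)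
      moreover have "card A1 = \<alpha>"
      proof -
        have "card (A - {x'}) = card A - 1" using x' finA by (simp add: card_Diff_singleton)
        moreover have "card A > 0" using finA x' card_gt_0_iff by blast
        ultimately show ?thesis using wc[OF A] finA zA by (simp add: A1_def)
      qed
      ultimately have A1: "maxind V E A1" by (rule card_maxind)
      have x'S: "x' \<notin> S" using x' zSadj by (auto simp: insert_commute)
      have "A - A1 = {x'}" using x' zA by (auto simp: A1_def)
      then have step: "Rel V E S A A1" using A A1 SA x'S by (auto simp: Rel_def A1_def)
      define S' where "S' = insert z S"
      have S': "indep V E S'" unfolding S'_def using S z zSadj
        by (intro indep_insert) (auto simp: insert_commute)
      have SS': "S \<subseteq> S'" by (auto simp: S'_def)
      have zNS: "z \<notin> NS E S" using zS zSadj by (auto simp: NS_def)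
      have "z \<in> NS E S'" by (auto simp: NS_def S'_def)
      then have lt: "card (V - NS E S') < card (V - NS E S)"
        using card_less_NS[OF SS' _ zNS] z by blast
      have yS': "y \<notin> NS E S'" using y zy by (auto simp: NS_def S'_def insert_commute)
      have yA1: "y \<notin> A1" using y zy by (auto simp: A1_def)
      have "S' \<subseteq> A1" using SA x'S by (auto simp: S'_def A1_def)
      from less.hyps[OF lt S' A1 this y(1) yS' yA1] obtain A2 where
        "(Rel V E S')\<^sup>*\<^sup>* A1 A2" "y \<in> A2" by blast
      then have "(Rel V E S)\<^sup>*\<^sup>* A1 A2" using Rel_mono[OF SS'] by blast
      then have "(Rel V E S)\<^sup>*\<^sup>* A A2" by (rule converse_rtranclp_into_rtranclp[where r="Rel V E S", OF step])
      then show ?thesis using \<open>y \<in> A2\<close> by blast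
    qed
  qed
qed

lemma connect:
  assumes "indep V E S" "maxind V E A" "maxind V E B" "S \<subseteq> A" "S \<subseteq> B"
  shows "(Rel V E S)\<^sup>*\<^sup>* A B"
  using assms
proof (induction "card (V - NS E S)" arbitrary: S A rule: less_induct)
  case less
  note S = less.prems(1) and A = less.prems(2) and B = less.prems(3) and SA = less.prems(4)
    and SB = less.prems(5)
  show ?case
  proof (cases "B \<subseteq> A")
    case True
    then have "A = B" using maxind_sub_eq[OF B] A by (simp add: maxind_def)
    then show ?thesis by simp
  next
    case False
    then obtain y where y: "y \<in> B" "y \<notin> A" by blast
    have Bind: "indep V E B" using B by (simp add: maxind_def)
    have yV: "y \<in> V" using y Bind by (auto simp: indep_def)
    have yNS: "y \<notin> NS E S" using y SA SB indep_edge[OF Bind] by (auto simp: NS_def)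
    obtain A1 where A1: "(Rel V E S)\<^sup>*\<^sup>* A A1" "y \<in> A1"
      using reach[OF S A SA yV yNS y(2)] by blast
    have A1m: "maxind V E A1" "S \<subseteq> A1"
      using A1(1) A SA by (induction rule: rtranclp_induct) (auto simp: Rel_def)
    define S' where "S' = insert y S"
    have S': "indep V E S'" by (rule indep_subset[OF Bind]) (use SB y(1) in \<open>auto simp: S'_def\<close>)
    have SS': "S \<subseteq> S'" by (auto simp: S'_def)
    have "y \<in> NS E S'" by (auto simp: NS_def S'_def)
    then have lt: "card (V - NS E S') < card (V - NS E S)"
      using card_less_NS[OF SS' yV yNS] by blast
    have "(Rel V E S')\<^sup>*\<^sup>* A1 B"
      using less.hyps[OF lt S' A1m(1) B] A1m(2) A1(2) SB y(1) by (auto simp: S'_def)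
    then have "(Rel V E S)\<^sup>*\<^sup>* A1 B" using Rel_mono[OF SS'] by blast
    then show ?thesis using A1(1) by (rule rtranclp_trans[rotated])
  qed
qed

end




definition le_pm :: "('v \<Rightarrow>\<^sub>0 nat) \<Rightarrow> ('v \<Rightarrow>\<^sub>0 nat) \<Rightarrow> bool" where
  "le_pm a b \<longleftrightarrow> (\<forall>v. Poly_Mapping.lookup a v \<le> Poly_Mapping.lookup b v)"

lemma lookup_sqfree: "finite C \<Longrightarrow> Poly_Mapping.lookup (sqfree_exp C) v = (if v \<in> C then 1 else 0)"
  by (simp add: sqfree_exp_def lookup_sum lookup_single when_def)

lemma le_pm_diff_add: "le_pm a b \<Longrightarrow> (b - a) + a = b"
  by (rule poly_mapping_eqI) (simp add: le_pm_def lookup_add lookup_minus)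

lemma le_pm_add: "le_pm a (d + a)"
  by (simp add: le_pm_def lookup_add)

lemma le_pm_trans: "le_pm a b \<Longrightarrow> le_pm b c \<Longrightarrow> le_pm a c"
  unfolding le_pm_def using order_trans by blast

lemma le_pm_antisym: "le_pm a b \<Longrightarrow> le_pm b a \<Longrightarrow> a = b"
  unfolding le_pm_def by (intro poly_mapping_eqI) (meson antisym)

lemma le_pm_sqfree: "finite C \<Longrightarrow> finite D \<Longrightarrow> le_pm (sqfree_exp C) (sqfree_exp D) \<longleftrightarrow> C \<subseteq> D"
  by (auto simp: le_pm_def lookup_sqfree split: if_splits)

lemma sqfree_inj: "finite C \<Longrightarrow> finite D \<Longrightarrow> sqfree_exp C = sqfree_exp D \<Longrightarrow> C = D"
  by (metis le_pm_sqfree order_refl le_pm_def subset_antisym)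

lemma keys_sqfree: "finite C \<Longrightarrow> Poly_Mapping.keys (sqfree_exp C) = C"
  by (auto simp: in_keys_iff lookup_sqfree split: if_splits)

lemma tdeg_sqfree: "finite C \<Longrightarrow> tdeg (sqfree_exp C) = card C"
  by (simp add: tdeg_def keys_sqfree lookup_sqfree)

lemma monom_mult: "(monom a :: ('v, 'k::field) mpoly) * monom b = monom (a + b)"
  by (simp add: monom_def mult_single)

lemma lookup_mult_monom:
  "Poly_Mapping.lookup (p * (monom e :: ('v, 'k::field) mpoly)) (d + e) = Poly_Mapping.lookup p d"
proof -
  have i: "(\<Sum>q. ((1::'k) when e = q) when d + e = l + q) = (1 when l = d)" for l
  proof -
    have "(\<Sum>q. ((1::'k) when e = q) when d + e = l + q) = (\<Sum>q. ((1::'k) when d + e = l + q) when e = q)"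
      by (simp only: when_commute)
    also have "\<dots> = (1 when d + e = l + e)" by (rule Sum_any_when_equal')
    also have "\<dots> = (1 when l = d)" by (rule when_cong) auto
    finally show ?thesis .
  qed
  have "Poly_Mapping.lookup (p * monom e) (d + e) =
     (\<Sum>l. Poly_Mapping.lookup p l * (\<Sum>q. (1 when e = q) when d + e = l + q))"
    by (simp only: lookup_mult monom_def lookup_single)
  also have "\<dots> = (\<Sum>l. Poly_Mapping.lookup p l when l = d)"
    by (simp only: i mult_when mult_1_right)
  also have "\<dots> = Poly_Mapping.lookup p d" by (rule Sum_any_when_equal)
  finally show ?thesis .
qed

lemma lookup_mult_monom0:
  assumes "\<not> (\<exists>d. g = d + e)"
  shows "Poly_Mapping.lookup (p * (monom e :: ('v, 'k::field) mpoly)) g = 0"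
proof (rule ccontr)
  assume "Poly_Mapping.lookup (p * monom e) g \<noteq> 0"
  then have "g \<in> Poly_Mapping.keys (p * monom e)" by (simp add: in_keys_iff)
  then have "g \<in> {a + b |a b. a \<in> Poly_Mapping.keys p \<and> b \<in> Poly_Mapping.keys (monom e :: ('v, 'k) mpoly)}"
    using keys_mult by blast
  then show False using assms by (auto simp: monom_def)
qed

lemma ideal_gen_mem: "u \<in> U \<Longrightarrow> p * u \<in> ideal_gen U"
  unfolding ideal_gen_def by (rule CollectI, rule exI[of _ "{u}"], rule exI[of _ "\<lambda>_. p"]) simp

lemma ideal_monom:
  assumes "(monom a :: ('v, 'k::field) mpoly) \<in> ideal_gen (monom ` X)"
  shows "\<exists>e\<in>X. le_pm e a"
proof -
  obtain F c where F: "finite F" "F \<subseteq> monom ` X" "(monom a :: ('v, 'k) mpoly) = (\<Sum>u\<in>F. c u * u)"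
    using assms unfolding ideal_gen_def by blast
  have "(1::'k) = Poly_Mapping.lookup (monom a :: ('v, 'k) mpoly) a" by (simp add: monom_def)
  also have "\<dots> = (\<Sum>u\<in>F. Poly_Mapping.lookup (c u * u) a)" by (simp add: F(3) lookup_sum)
  finally have "(\<Sum>u\<in>F. Poly_Mapping.lookup (c u * u) a) \<noteq> 0" by simp
  then obtain u where u: "u \<in> F" "Poly_Mapping.lookup (c u * u) a \<noteq> 0"
    by (meson sum.not_neutral_contains_not_neutral)
  then obtain e where e: "e \<in> X" "u = monom e" using F(2) by blast
  have "\<exists>d. a = d + e" using lookup_mult_monom0[of a e "c u"] u e by blast
  then show ?thesis using e le_pm_add by blast
qed

lemma span_0: "(\<lambda>a. 0) \<in> module_span L"
  unfolding module_span_def by (rule CollectI, rule exI[of _ "{}"]) simp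

lemma span_base: "g \<in> L \<Longrightarrow> g \<in> module_span L"
  unfolding module_span_def by (rule CollectI, rule exI[of _ "{g}"], rule exI[of _ "\<lambda>_. 1"]) simp

lemma span_add:
  assumes "f1 \<in> module_span L" "f2 \<in> module_span L"
  shows "(\<lambda>a. f1 a + f2 a) \<in> module_span L"
proof -
  obtain F1 c1 where 1: "finite F1" "F1 \<subseteq> L" "f1 = (\<lambda>a. \<Sum>g\<in>F1. c1 g * g a)"
    using assms(1) unfolding module_span_def by blast
  obtain F2 c2 where 2: "finite F2" "F2 \<subseteq> L" "f2 = (\<lambda>a. \<Sum>g\<in>F2. c2 g * g a)"
    using assms(2) unfolding module_span_def by blast
  define c where "c g = (if g \<in> F1 then c1 g else 0) + (if g \<in> F2 then c2 g else 0)" for g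
  have "\<And>a. (\<Sum>g\<in>F1 \<union> F2. c g * g a) = f1 a + f2 a"
  proof -
    fix a
    have "(\<Sum>g\<in>F1 \<union> F2. c g * g a) = (\<Sum>g\<in>F1 \<union> F2. (if g \<in> F1 then c1 g * g a else 0))
         + (\<Sum>g\<in>F1 \<union> F2. (if g \<in> F2 then c2 g * g a else 0))"
      unfolding sum.distrib[symmetric] by (rule sum.cong) (auto simp: c_def distrib_right)
    also have "(\<Sum>g\<in>F1 \<union> F2. (if g \<in> F1 then c1 g * g a else 0)) = (\<Sum>g\<in>F1. c1 g * g a)"
      using 1(1) 2(1) by (simp add: sum.If_cases Int_absorb1)
    also have "(\<Sum>g\<in>F1 \<union> F2. (if g \<in> F2 then c2 g * g a else 0)) = (\<Sum>g\<in>F2. c2 g * g a)"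
      using 1(1) 2(1) by (simp add: sum.If_cases Int_absorb1)
    finally show "(\<Sum>g\<in>F1 \<union> F2. c g * g a) = f1 a + f2 a" using 1(3) 2(3) by simp
  qed
  then show ?thesis unfolding module_span_def using 1 2
    by (intro CollectI exI[of _ "F1 \<union> F2"] exI[of _ c]) auto
qed

lemma span_smult:
  assumes "f \<in> module_span L"
  shows "(\<lambda>a. p * f a) \<in> module_span L"
proof -
  obtain F c where 1: "finite F" "F \<subseteq> L" "f = (\<lambda>a. \<Sum>g\<in>F. c g * g a)"
    using assms unfolding module_span_def by blast
  have "(\<lambda>a. p * f a) = (\<lambda>a. \<Sum>g\<in>F. (p * c g) * g a)"
    by (simp add: 1(3) sum_distrib_left mult.assoc)
  then show ?thesis unfolding module_span_def using 1
    by (intro CollectI exI[of _ F] exI[of _ "\<lambda>g. p * c g"]) simp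
qed

lemma span_diff:
  assumes "f1 \<in> module_span L" "f2 \<in> module_span L"
  shows "(\<lambda>a. f1 a - f2 a) \<in> module_span L"
proof -
  have "(\<lambda>a. f1 a + (-1) * f2 a) \<in> module_span L"
    using span_add[OF assms(1) span_smult[OF assms(2)]] .
  moreover have "(\<lambda>a. f1 a + (-1) * f2 a) = (\<lambda>a. f1 a - f2 a)" by (simp add: fun_eq_iff)
  ultimately show ?thesis by simp
qed

lemma sum_two:
  assumes "finite M" "a0 \<in> M" "a1 \<in> M" "a0 \<noteq> a1" "\<forall>a\<in>M. a \<noteq> a0 \<longrightarrow> a \<noteq> a1 \<longrightarrow> h a = 0"
  shows "(\<Sum>a\<in>M. h a) = h a0 + h a1"
proof -
  have "(\<Sum>a\<in>M. h a) = (\<Sum>a\<in>{a0, a1}. h a)"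
    using assms by (intro sum.mono_neutral_right) auto
  then show ?thesis using assms(4) by simp
qed




definition sig :: "'v set \<Rightarrow> 'v set \<Rightarrow> ('v \<Rightarrow>\<^sub>0 nat) \<Rightarrow> ('v, 'k::field) mpoly" where
  "sig C D = (\<lambda>a. if a = sqfree_exp C then monom (sqfree_exp (D - C))
       else if a = sqfree_exp D then - monom (sqfree_exp (C - D)) else 0)"

definition vec :: "('v \<Rightarrow>\<^sub>0 nat) \<Rightarrow> 'v set \<Rightarrow> ('v \<Rightarrow>\<^sub>0 nat) \<Rightarrow> ('v, 'k::field) mpoly" where
  "vec g C = (\<lambda>a. if a = sqfree_exp C then monom (g - sqfree_exp C) else 0)"

definition LL :: "'v set \<Rightarrow> 'v set set \<Rightarrow> (('v \<Rightarrow>\<^sub>0 nat) \<Rightarrow> ('v, 'k::field) mpoly) set" where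
  "LL V E = {sig C D | C D. minimal_vertex_cover V E C \<and> minimal_vertex_cover V E D \<and>
      card (D - C) = 1 \<and> card (C - D) = 1}"

lemma sqfree_union_exp:
  assumes "finite C" "finite D"
  shows "sqfree_exp (D - C) + sqfree_exp C = sqfree_exp (C \<union> D)"
  using assms by (intro poly_mapping_eqI) (simp add: lookup_add lookup_sqfree)

lemma vec_step:
  assumes fin: "finite C" "finite D" and ne: "C \<noteq> D" and le: "le_pm (sqfree_exp (C \<union> D)) g"
  shows "(\<lambda>a. vec g C a - vec g D a) = (\<lambda>a. monom (g - sqfree_exp (C \<union> D)) * (sig C D a :: ('v, 'k::field) mpoly))"
proof
  fix a
  have neq: "sqfree_exp C \<noteq> sqfree_exp D" using sqfree_inj fin ne by blast
  have e1: "g - sqfree_exp (C \<union> D) + sqfree_exp (D - C) = g - sqfree_exp C"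
    using le fin by (intro poly_mapping_eqI) (auto simp: lookup_add lookup_minus lookup_sqfree le_pm_def split: if_splits)
  have e2: "g - sqfree_exp (C \<union> D) + sqfree_exp (C - D) = g - sqfree_exp D"
    using le fin by (intro poly_mapping_eqI) (auto simp: lookup_add lookup_minus lookup_sqfree le_pm_def split: if_splits)
  show "vec g C a - vec g D a = monom (g - sqfree_exp (C \<union> D)) * (sig C D a :: ('v, 'k::field) mpoly)"
    using neq by (auto simp: vec_def sig_def monom_mult e1 e2)
qed

context sgr
begin

lemma mvc_iff: "minimal_vertex_cover V E C \<longleftrightarrow> C \<subseteq> V \<and> maxind V E (V - C)"
proof
  assume C: "minimal_vertex_cover V E C"
  have CV: "C \<subseteq> V" using C by (simp add: minimal_vertex_cover_def vertex_cover_def)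
  have ind: "indep V E (V - C)"
    using C by (auto simp: minimal_vertex_cover_def vertex_cover_def indep_def)
  have "\<not> indep V E (insert v (V - C))" if v: "v \<in> C" for v
  proof
    assume i: "indep V E (insert v (V - C))"
    have "vertex_cover V E (C - {v})"
      unfolding vertex_cover_def
    proof (intro conjI ballI)
      show "C - {v} \<subseteq> V" using CV by blast
    next
      fix e assume e: "e \<in> E"
      then have "\<not> e \<subseteq> insert v (V - C)" using i by (simp add: indep_def)
      moreover have "e \<subseteq> V" using edge e by blast
      ultimately show "e \<inter> (C - {v}) \<noteq> {}" by blast
    qed
    moreover have "C - {v} \<subset> C" using v by blast
    ultimately show False using C by (simp add: minimal_vertex_cover_def)
  qed
  then show "C \<subseteq> V \<and> maxind V E (V - C)" using CV ind by (auto simp: maxind_def)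
next
  assume C: "C \<subseteq> V \<and> maxind V E (V - C)"
  have vc: "vertex_cover V E C"
    unfolding vertex_cover_def
  proof (intro conjI ballI)
    show "C \<subseteq> V" using C by blast
  next
    fix e assume e: "e \<in> E"
    then have "\<not> e \<subseteq> V - C" using C by (simp add: maxind_def indep_def)
    moreover have "e \<subseteq> V" using edge e by blast
    ultimately show "e \<inter> C \<noteq> {}" by blast
  qed
  have "\<not> vertex_cover V E D" if D: "D \<subset> C" for D
  proof
    assume Dc: "vertex_cover V E D"
    obtain v where v: "v \<in> C" "v \<notin> D" using D by blast
    have "indep V E (insert v (V - C))"
      unfolding indep_def
    proof (intro conjI ballI)
      show "insert v (V - C) \<subseteq> V" using C v by blast
    next
      fix e assume e: "e \<in> E"
      then obtain x where "x \<in> e" "x \<in> D" using Dc by (auto simp: vertex_cover_def)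
      then show "\<not> e \<subseteq> insert v (V - C)" using D v by blast
    qed
    then show False using C v by (auto simp: maxind_def)
  qed
  then show "minimal_vertex_cover V E C" using vc by (simp add: minimal_vertex_cover_def)
qed

lemma mvc_finite: "minimal_vertex_cover V E C \<Longrightarrow> finite C"
  using mvc_iff finV finite_subset by blast

lemma maxind_subV: "maxind V E A \<Longrightarrow> A \<subseteq> V"
  by (simp add: maxind_def indep_def)

lemma maxind_mvc: "maxind V E A \<Longrightarrow> minimal_vertex_cover V E (V - A)"
  using mvc_iff maxind_subV by (simp add: double_diff)

end

locale wc2 = wc V E \<alpha> for V :: "'v set" and E and \<alpha>
begin

lemma path_span:
  assumes "(Rel V E S)\<^sup>*\<^sup>* X Y" "le_pm (sqfree_exp (V - S)) g" "maxind V E X" "S \<subseteq> X"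
  shows "(\<lambda>a. vec g (V - X) a - vec g (V - Y) a) \<in> module_span (LL V E :: (('v \<Rightarrow>\<^sub>0 nat) \<Rightarrow> ('v, 'k::field) mpoly) set)"
  using assms(1)
proof (induction rule: rtranclp_induct)
  case base
  show ?case using span_0 by simp
next
  case (step Y Z)
  have R: "maxind V E Y" "maxind V E Z" "card (Y - Z) = 1" "S \<subseteq> Y" "S \<subseteq> Z"
    using step(2) by (auto simp: Rel_def)
  define C where "C = V - Y"
  define D where "D = V - Z"
  have YV: "Y \<subseteq> V" "Z \<subseteq> V" using R maxind_subV by auto
  have finYZ: "finite Y" "finite Z" using YV finV finite_subset by auto
  have DC: "D - C = Y - Z" "C - D = Z - Y" using YV by (auto simp: C_def D_def)
  have cY: "card Y = card Z" using wc R by auto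
  have c1: "card (D - C) = 1" using DC R by simp
  have c2: "card (C - D) = 1"
  proof -
    have "card (Y - Z) = card Y - card (Y \<inter> Z)"
      using finYZ by (intro card_Diff_subset_Int) simp
    moreover have "card (Z - Y) = card Z - card (Z \<inter> Y)"
      using finYZ by (intro card_Diff_subset_Int) simp
    ultimately show ?thesis using DC R cY by (simp add: Int_commute)
  qed
  have mC: "minimal_vertex_cover V E C" "minimal_vertex_cover V E D"
    using maxind_mvc R by (auto simp: C_def D_def)
  have finCD: "finite C" "finite D" using mC mvc_finite by auto
  have ne: "C \<noteq> D" using c1 by auto
  have "le_pm (sqfree_exp (C \<union> D)) (sqfree_exp (V - S))"
    using le_pm_sqfree[of "C \<union> D" "V - S"] finCD finV R by (auto simp: C_def D_def)
  then have le: "le_pm (sqfree_exp (C \<union> D)) g" using assms(2) le_pm_trans by blast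
  have "sig C D \<in> (LL V E :: (('v \<Rightarrow>\<^sub>0 nat) \<Rightarrow> ('v, 'k::field) mpoly) set)"
    unfolding LL_def using mC c1 c2 by blast
  then have "(\<lambda>a. monom (g - sqfree_exp (C \<union> D)) * (sig C D a :: ('v, 'k) mpoly)) \<in> module_span (LL V E)"
    by (rule span_smult[OF span_base])
  then have "(\<lambda>a. vec g C a - vec g D a) \<in> module_span (LL V E :: (('v \<Rightarrow>\<^sub>0 nat) \<Rightarrow> ('v, 'k::field) mpoly) set)"
    unfolding vec_step[OF finCD ne le] .
  from span_add[OF step(3) this] show ?case by (simp add: C_def D_def)
qed

end




context wc2
begin

definition "Cs = {C. minimal_vertex_cover V E C}"

lemma finite_Cs: "finite Cs"
proof -
  have "Cs \<subseteq> Pow V" using mvc_iff by (auto simp: Cs_def)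
  then show ?thesis using finV finite_subset by blast
qed

lemma cover_ideal_eq: "(cover_ideal V E :: ('v, 'k::field) mpoly set) = ideal_gen (monom ` sqfree_exp ` Cs)"
proof -
  have "{(monom (sqfree_exp C) :: ('v, 'k) mpoly) | C. minimal_vertex_cover V E C} = monom ` sqfree_exp ` Cs"
    by (auto simp: Cs_def)
  then show ?thesis by (simp add: cover_ideal_def)
qed

lemma mem_I: "(monom a :: ('v, 'k::field) mpoly) \<in> cover_ideal V E \<longleftrightarrow> (\<exists>C\<in>Cs. le_pm (sqfree_exp C) a)"
proof
  assume "(monom a :: ('v, 'k::field) mpoly) \<in> cover_ideal V E"
  then have "(monom a :: ('v, 'k::field) mpoly) \<in> ideal_gen (monom ` sqfree_exp ` Cs)"
    by (simp add: cover_ideal_eq)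
  then show "\<exists>C\<in>Cs. le_pm (sqfree_exp C) a" using ideal_monom by blast
next
  assume "\<exists>C\<in>Cs. le_pm (sqfree_exp C) a"
  then obtain C where C: "C \<in> Cs" "le_pm (sqfree_exp C) a" by blast
  have "(monom a :: ('v, 'k::field) mpoly) = monom (a - sqfree_exp C) * monom (sqfree_exp C)"
    by (simp add: monom_mult le_pm_diff_add[OF C(2)])
  moreover have "(monom (sqfree_exp C) :: ('v, 'k) mpoly) \<in> monom ` sqfree_exp ` Cs" using C by blast
  ultimately show "(monom a :: ('v, 'k::field) mpoly) \<in> cover_ideal V E"
    by (simp add: cover_ideal_eq ideal_gen_mem)
qed

lemma Cs_finite: "C \<in> Cs \<Longrightarrow> finite C"
  using mvc_finite by (simp add: Cs_def)

lemma mingens: "min_monomial_gens (cover_ideal V E :: ('v, 'k::field) mpoly set) = sqfree_exp ` Cs"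
proof
  show "min_monomial_gens (cover_ideal V E :: ('v, 'k::field) mpoly set) \<subseteq> sqfree_exp ` Cs"
  proof
    fix a assume a: "a \<in> min_monomial_gens (cover_ideal V E :: ('v, 'k::field) mpoly set)"
    then have "(monom a :: ('v, 'k::field) mpoly) \<in> cover_ideal V E" by (simp add: min_monomial_gens_def)
    then obtain C where C: "C \<in> Cs" "le_pm (sqfree_exp C) a" using mem_I by blast
    have "(monom (sqfree_exp C) :: ('v, 'k::field) mpoly) \<in> cover_ideal V E"
      using mem_I C(1) le_pm_def by blast
    then have "sqfree_exp C = a" using a C(2) unfolding min_monomial_gens_def le_pm_def by blast
    then show "a \<in> sqfree_exp ` Cs" using C by blast
  qed
next
  show "sqfree_exp ` Cs \<subseteq> min_monomial_gens (cover_ideal V E :: ('v, 'k::field) mpoly set)"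
  proof
    fix a assume "a \<in> sqfree_exp ` Cs"
    then obtain C where C: "C \<in> Cs" "a = sqfree_exp C" by blast
    have in1: "(monom a :: ('v, 'k::field) mpoly) \<in> cover_ideal V E"
      using mem_I C le_pm_def by blast
    have "(monom b :: ('v, 'k::field) mpoly) \<notin> cover_ideal V E"
      if b: "\<forall>v. Poly_Mapping.lookup b v \<le> Poly_Mapping.lookup a v" "b \<noteq> a" for b
    proof
      assume "(monom b :: ('v, 'k::field) mpoly) \<in> cover_ideal V E"
      then obtain D where D: "D \<in> Cs" "le_pm (sqfree_exp D) b" using mem_I by blast
      have ba: "le_pm b a" using b by (simp add: le_pm_def)
      then have "le_pm (sqfree_exp D) (sqfree_exp C)" using D C le_pm_trans by blast
      then have DC: "D \<subseteq> C" using le_pm_sqfree Cs_finite C D by blast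
      show False
      proof (cases "D = C")
        case True
        then have "b = a" using le_pm_antisym D ba C by blast
        then show False using b by blast
      next
        case False
        then have "D \<subset> C" using DC by blast
        then show False using C D by (auto simp: Cs_def minimal_vertex_cover_def)
      qed
    qed
    then show "a \<in> min_monomial_gens (cover_ideal V E :: ('v, 'k::field) mpoly set)"
      using in1 by (auto simp: min_monomial_gens_def)
  qed
qed

lemma LL_syz: "(LL V E :: (('v \<Rightarrow>\<^sub>0 nat) \<Rightarrow> ('v, 'k::field) mpoly) set) \<subseteq> syz (sqfree_exp ` Cs)"
proof
  fix g :: "('v \<Rightarrow>\<^sub>0 nat) \<Rightarrow> ('v, 'k::field) mpoly"
  assume "g \<in> LL V E"
  then obtain C D where g: "g = sig C D" and CD: "C \<in> Cs" "D \<in> Cs" "card (D - C) = 1" "card (C - D) = 1"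
    by (auto simp: LL_def Cs_def)
  have fin: "finite C" "finite D" using CD Cs_finite by auto
  have ne: "sqfree_exp C \<noteq> sqfree_exp D" using sqfree_inj fin CD(3) by fastforce
  have out: "\<forall>a. a \<notin> sqfree_exp ` Cs \<longrightarrow> g a = 0" using CD by (auto simp: g sig_def)
  have "(\<Sum>a\<in>sqfree_exp ` Cs. g a * monom a) = g (sqfree_exp C) * monom (sqfree_exp C) + g (sqfree_exp D) * monom (sqfree_exp D)"
    using CD ne finite_Cs by (intro sum_two) (auto simp: g sig_def)
  also have "\<dots> = monom (sqfree_exp (D - C) + sqfree_exp C) - monom (sqfree_exp (C - D) + sqfree_exp D)"
    using ne by (simp add: g sig_def monom_mult)
  also have "\<dots> = 0" using fin by (simp add: sqfree_union_exp Un_commute)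
  finally show "g \<in> syz (sqfree_exp ` Cs)" using out by (simp add: syz_def)
qed

lemma linear_single: "linear_form (monom (sqfree_exp {v}) :: ('v, 'k::field) mpoly)"
  by (simp add: linear_form_def monom_def tdeg_sqfree)

lemma LL_linear: "g \<in> (LL V E :: (('v \<Rightarrow>\<^sub>0 nat) \<Rightarrow> ('v, 'k::field) mpoly) set) \<Longrightarrow> linear_form (g a)"
proof -
  assume "g \<in> LL V E"
  then obtain C D where g: "g = sig C D" and CD: "card (D - C) = 1" "card (C - D) = 1"
    by (auto simp: LL_def)
  obtain v where v: "D - C = {v}" using CD(1) card_1_singletonE by blast
  obtain w where w: "C - D = {w}" using CD(2) card_1_singletonE by blast
  show ?thesis using linear_single[of v] linear_single[of w]
    by (auto simp: g sig_def v w linear_form_def)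
qed

end




context wc2
begin

lemma syz_span:
  fixes f :: "('v \<Rightarrow>\<^sub>0 nat) \<Rightarrow> ('v, 'k::field) mpoly"
  assumes "f \<in> syz (sqfree_exp ` Cs)"
  shows "f \<in> module_span (LL V E)"
  using assms
proof (induction "\<Sum>a\<in>sqfree_exp ` Cs. card (Poly_Mapping.keys (f a))" arbitrary: f rule: less_induct)
  case less
  define M where "M = sqfree_exp ` Cs"
  have finM: "finite M" using finite_Cs by (simp add: M_def)
  have f0: "\<forall>a. a \<notin> M \<longrightarrow> f a = 0" and fs: "(\<Sum>a\<in>M. f a * monom a) = 0"
    using less.prems by (auto simp: syz_def M_def)
  show ?case
  proof (cases "\<forall>a\<in>M. f a = 0")
    case True
    then have "f = (\<lambda>a. 0)" using f0 by auto
    then show ?thesis using span_0 by simp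
  next
    case False
    then obtain a0 where a0: "a0 \<in> M" "f a0 \<noteq> 0" by blast
    then obtain \<beta> where \<beta>: "\<beta> \<in> Poly_Mapping.keys (f a0)"
      by (metis all_not_in_conv keys_eq_empty)
    define c where "c = Poly_Mapping.lookup (f a0) \<beta>"
    have c0: "c \<noteq> 0" using \<beta> by (simp add: c_def in_keys_iff)
    define \<gamma> where "\<gamma> = \<beta> + a0"
    have "0 = Poly_Mapping.lookup (\<Sum>a\<in>M. f a * monom a) \<gamma>" using fs by simp
    also have "\<dots> = (\<Sum>a\<in>M. Poly_Mapping.lookup (f a * monom a) \<gamma>)" by (simp add: lookup_sum)
    also have "\<dots> = Poly_Mapping.lookup (f a0 * monom a0) \<gamma> + (\<Sum>a\<in>M - {a0}. Poly_Mapping.lookup (f a * monom a) \<gamma>)"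
      using finM a0 by (simp add: sum.remove)
    also have "Poly_Mapping.lookup (f a0 * monom a0) \<gamma> = c"
      by (simp add: \<gamma>_def c_def lookup_mult_monom)
    finally have "(\<Sum>a\<in>M - {a0}. Poly_Mapping.lookup (f a * monom a) \<gamma>) \<noteq> 0"
      using c0 by auto
    then obtain a1 where a1: "a1 \<in> M - {a0}" "Poly_Mapping.lookup (f a1 * monom a1) \<gamma> \<noteq> 0"
      by (meson sum.not_neutral_contains_not_neutral)
    then obtain \<delta> where \<delta>: "\<gamma> = \<delta> + a1" using lookup_mult_monom0 by blast
    have dk: "Poly_Mapping.lookup (f a1) \<delta> \<noteq> 0" using a1 \<delta> lookup_mult_monom by metis
    obtain C0 where C0: "C0 \<in> Cs" "a0 = sqfree_exp C0" using a0 by (auto simp: M_def)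
    obtain C1 where C1: "C1 \<in> Cs" "a1 = sqfree_exp C1" using a1 by (auto simp: M_def)
    have a01: "a0 \<noteq> a1" using a1 by blast
    define \<tau> :: "('v \<Rightarrow>\<^sub>0 nat) \<Rightarrow> ('v, 'k) mpoly" where
      "\<tau> = (\<lambda>a. if a = a0 then Poly_Mapping.single \<beta> c else if a = a1 then - Poly_Mapping.single \<delta> c else 0)"
    have \<tau>span: "\<tau> \<in> module_span (LL V E)"
    proof -
      have CV: "C0 \<subseteq> V" "C1 \<subseteq> V" using C0 C1 mvc_iff by (auto simp: Cs_def)
      have A0: "maxind V E (V - C0)" and A1: "maxind V E (V - C1)"
        using C0 C1 mvc_iff by (auto simp: Cs_def)
      have ind: "indep V E ((V - C0) \<inter> (V - C1))"
        using A0 indep_subset by (auto simp: maxind_def)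
      have path: "(Rel V E ((V - C0) \<inter> (V - C1)))\<^sup>*\<^sup>* (V - C0) (V - C1)"
        using connect[OF ind A0 A1] by blast
      have VS: "V - ((V - C0) \<inter> (V - C1)) = C0 \<union> C1" using CV by blast
      have fin: "finite C0" "finite C1" using C0 C1 Cs_finite by auto
      have le0: "le_pm a0 \<gamma>" by (simp add: \<gamma>_def le_pm_add)
      have le1: "le_pm a1 \<gamma>" by (simp add: \<delta> le_pm_add)
      have le: "le_pm (sqfree_exp (C0 \<union> C1)) \<gamma>"
        unfolding le_pm_def
      proof
        fix v
        show "Poly_Mapping.lookup (sqfree_exp (C0 \<union> C1)) v \<le> Poly_Mapping.lookup \<gamma> v"
          using le0 le1 fin unfolding le_pm_def C0(2) C1(2)
          by (simp add: lookup_sqfree split: if_splits)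
      qed
      have "(\<lambda>a. vec \<gamma> (V - (V - C0)) a - vec \<gamma> (V - (V - C1)) a)
              \<in> module_span (LL V E :: (('v \<Rightarrow>\<^sub>0 nat) \<Rightarrow> ('v, 'k) mpoly) set)"
        using path_span[OF path] le VS A0 by simp
      moreover have "V - (V - C0) = C0" "V - (V - C1) = C1" using CV by auto
      ultimately have "(\<lambda>a. vec \<gamma> C0 a - vec \<gamma> C1 a)
              \<in> module_span (LL V E :: (('v \<Rightarrow>\<^sub>0 nat) \<Rightarrow> ('v, 'k) mpoly) set)" by simp
      then have "(\<lambda>a. Poly_Mapping.single 0 c * (vec \<gamma> C0 a - vec \<gamma> C1 a))
              \<in> module_span (LL V E :: (('v \<Rightarrow>\<^sub>0 nat) \<Rightarrow> ('v, 'k) mpoly) set)"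
        by (rule span_smult)
      moreover have "(\<lambda>a. Poly_Mapping.single 0 c * (vec \<gamma> C0 a - vec \<gamma> C1 a)) = \<tau>"
      proof
        fix a
        have g0: "\<gamma> - a0 = \<beta>" by (simp add: \<gamma>_def)
        have g1: "\<gamma> - a1 = \<delta>" by (simp add: \<delta>)
        show "Poly_Mapping.single 0 c * (vec \<gamma> C0 a - vec \<gamma> C1 a) = \<tau> a"
          using a01 by (auto simp: vec_def \<tau>_def C0(2)[symmetric] C1(2)[symmetric] g0 g1 monom_def mult_single)
      qed
      ultimately show ?thesis by simp
    qed
    define f' where "f' = (\<lambda>a. f a - \<tau> a)"
    have f'syz: "f' \<in> syz (sqfree_exp ` Cs)"
    proof -
      have out: "\<forall>a. a \<notin> M \<longrightarrow> f' a = 0"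
        using f0 a0 a1 by (auto simp: f'_def \<tau>_def)
      have "(\<Sum>a\<in>M. \<tau> a * monom a) = \<tau> a0 * monom a0 + \<tau> a1 * monom a1"
        using finM a0 a1 a01 by (intro sum_two) (auto simp: \<tau>_def)
      also have "\<dots> = 0"
        using a01 by (simp add: \<tau>_def monom_def mult_single \<gamma>_def[symmetric] \<delta>[symmetric])
      finally have t0: "(\<Sum>a\<in>M. \<tau> a * monom a) = 0" .
      have "(\<Sum>a\<in>M. f' a * monom a) = (\<Sum>a\<in>M. f a * monom a) - (\<Sum>a\<in>M. \<tau> a * monom a)"
        by (simp add: f'_def left_diff_distrib sum_subtractf)
      then have "(\<Sum>a\<in>M. f' a * monom a) = 0" using fs t0 by simp
      then show ?thesis using out by (simp add: syz_def M_def)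
    qed
    have lt: "(\<Sum>a\<in>sqfree_exp ` Cs. card (Poly_Mapping.keys (f' a))) < (\<Sum>a\<in>sqfree_exp ` Cs. card (Poly_Mapping.keys (f a)))"
    proof -
      have k0: "Poly_Mapping.keys (f' a0) \<subseteq> Poly_Mapping.keys (f a0) - {\<beta>}"
        using a01 by (auto simp: f'_def \<tau>_def in_keys_iff lookup_minus lookup_single c_def when_def split: if_splits)
      have k1: "Poly_Mapping.keys (f' a1) \<subseteq> Poly_Mapping.keys (f a1)"
        using a01 dk by (auto simp: f'_def \<tau>_def in_keys_iff lookup_minus lookup_single when_def lookup_add split: if_splits)
      have le: "card (Poly_Mapping.keys (f' a)) \<le> card (Poly_Mapping.keys (f a))" for a
      proof (cases "a = a0 \<or> a = a1")
        case True
        moreover have "Poly_Mapping.keys (f' a0) \<subseteq> Poly_Mapping.keys (f a0)" using k0 by blast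
        ultimately have "Poly_Mapping.keys (f' a) \<subseteq> Poly_Mapping.keys (f a)" using k1 by blast
        then show ?thesis by (rule card_mono[OF finite_keys])
      next
        case False
        then show ?thesis by (simp add: f'_def \<tau>_def)
      qed
      have "card (Poly_Mapping.keys (f' a0)) < card (Poly_Mapping.keys (f a0))"
      proof (rule psubset_card_mono[OF finite_keys])
        show "Poly_Mapping.keys (f' a0) \<subset> Poly_Mapping.keys (f a0)" using k0 \<beta> by blast
      qed
      then show ?thesis using a0 finM le unfolding M_def
        by (intro sum_strict_mono_ex1) auto
    qed
    have "f' \<in> module_span (LL V E)" using less.hyps[OF lt f'syz] .
    from span_add[OF this \<tau>span] have "(\<lambda>a. f' a + \<tau> a) \<in> module_span (LL V E)" .
    moreover have "(\<lambda>a. f' a + \<tau> a) = f" by (simp add: f'_def)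
    ultimately show ?thesis by simp
  qed
qed

end




theorem theorem5p13:
  fixes V :: "'v set" and E :: "'v set set"
  assumes "simple_graph V E"
    and "unmixed V E"
    and "\<not> has_induced_C4 V E"
  shows "linearly_presented (cover_ideal V E :: ('v, 'k::field) mpoly set)"
proof -
  interpret sgr V E by (rule sgr.intro) (rule assms(1))
  obtain \<alpha> where \<alpha>: "\<And>A. maxind V E A \<Longrightarrow> card A = \<alpha>"
  proof (cases "\<exists>A0. maxind V E A0")
    case True
    then obtain A0 where A0: "maxind V E A0" by blast
    show ?thesis
    proof (rule that[of "card A0"])
      fix A assume A: "maxind V E A"
      have "card (V - A) = card (V - A0)"
        using assms(2) maxind_mvc[OF A] maxind_mvc[OF A0] unfolding unmixed_def by blast
      moreover have "card (V - A) = card V - card A" "card A \<le> card V"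
        using card_Diff_subset[OF finite_subset[OF maxind_subV[OF A] finV] maxind_subV[OF A]]
          card_mono[OF finV maxind_subV[OF A]] by auto
      moreover have "card (V - A0) = card V - card A0" "card A0 \<le> card V"
        using card_Diff_subset[OF finite_subset[OF maxind_subV[OF A0] finV] maxind_subV[OF A0]]
          card_mono[OF finV maxind_subV[OF A0]] by auto
      ultimately show "card A = card A0" by linarith
    qed
  next
    case False
    show ?thesis
    proof (rule that[of 0])
      fix A assume "maxind V E A"
      then show "card A = 0" using False by blast
    qed
  qed
  interpret wc2 V E \<alpha>
    by (intro wc2.intro wc.intro wc_axioms.intro sgr.intro assms(1) assms(3)) (rule \<alpha>)
  have tdeq: "\<forall>a\<in>sqfree_exp ` Cs. \<forall>b\<in>sqfree_exp ` Cs. tdeg a = tdeg b"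
  proof (intro ballI)
    fix a b assume "a \<in> sqfree_exp ` Cs" "b \<in> sqfree_exp ` Cs"
    then obtain C D where CD: "C \<in> Cs" "D \<in> Cs" "a = sqfree_exp C" "b = sqfree_exp D" by blast
    have "minimal_vertex_cover V E C" "minimal_vertex_cover V E D" using CD(1,2) by (auto simp: Cs_def)
    then have "card C = card D" using assms(2) unfolding unmixed_def by blast
    then show "tdeg a = tdeg b" using CD Cs_finite by (simp add: tdeg_sqfree)
  qed
  show ?thesis
    unfolding linearly_presented_def Let_def mingens
  proof (intro conjI)
    show "finite (sqfree_exp ` Cs)" using finite_Cs by simp
    show "\<forall>a\<in>sqfree_exp ` Cs. \<forall>b\<in>sqfree_exp ` Cs. tdeg a = tdeg b" by (rule tdeq)
    show "\<exists>L :: (('v \<Rightarrow>\<^sub>0 nat) \<Rightarrow> ('v, 'k) mpoly) set. L \<subseteq> syz (sqfree_exp ` Cs) \<and>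
        (\<forall>g\<in>L. \<forall>a\<in>sqfree_exp ` Cs. linear_form (g a)) \<and> syz (sqfree_exp ` Cs) \<subseteq> module_span L"
      apply (rule exI[of _ "LL V E"])
      apply (intro conjI)
        apply (rule LL_syz)
       apply (intro ballI)
       apply (erule LL_linear)
      apply (intro subsetI)
      apply (erule syz_span)
      done
  qed
qed


end
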